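(* Let $\beta>\alpha>0$ and let $q=(q_1,q_2,q_3,q_4)$ be a convex non-collinear central configuration of the planar Newtonian 4-body problem with masses $m_1=m_2=\beta$, $m_3=m_4=\alpha$, with $q_1,q_2,q_3,q_4$ in cyclic order around the convex quadrilateral. If $r_{23}=r_{14}$, then $\Delta_4=-\Delta_3$.
   Context: Bodies have positions $q_i\in\mathbb{R}^2$ and masses $m_i>0$; $r_{ij}=\|q_i-q_j\|$; $U(q)=\sum_{i<j}m_im_j/r_{ij}$. A configuration with distinct points and $\sum_i m_iq_i=0$ is a central configuration if $\sum_{j\neq i} m_j\frac{q_j-q_i}{r_{ij}^3}=\lambda q_i$ for all $i$ and some constant $\lambda$. "Convex non-collinear": the four points are vertices of a strictly convex quadrilateral. For $1\le i\le 4$, $|\Delta_i|$ denotes the area of the triangle formed by the three points $q_j$, $j\neq i$, and the oriented areas are $\Delta_1=-|\Delta_1|$, $\Delta_2=|\Delta_2|$, $\Delta_3=-|\Delta_3|$, $\Delta_4=|\Delta_4|$; they satisfy $\Delta_1+\Delta_2+\Delta_3+\Delta_4=0$. *)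

theory Defs
  imports "HOL-Analysis.Analysis"
begin

definition det3 :: "real^2 \<Rightarrow> real^2 \<Rightarrow> real^2 \<Rightarrow> real" where
  "det3 a b c = (b$1 - a$1) * (c$2 - a$2) - (b$2 - a$2) * (c$1 - a$1)"

definition tri_area :: "real^2 \<Rightarrow> real^2 \<Rightarrow> real^2 \<Rightarrow> real" where
  "tri_area a b c = \<bar>det3 a b c\<bar> / 2"

definition abs_Delta :: "(nat \<Rightarrow> real^2) \<Rightarrow> nat \<Rightarrow> real" where
  "abs_Delta q i = (if i = 1 then tri_area (q 2) (q 3) (q 4)
                    else if i = 2 then tri_area (q 1) (q 3) (q 4)
                    else if i = 3 then tri_area (q 1) (q 2) (q 4)
                    else tri_area (q 1) (q 2) (q 3))"

definition Delta :: "(nat \<Rightarrow> real^2) \<Rightarrow> nat \<Rightarrow> real" where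
  "Delta q i = (if even i then abs_Delta q i else - abs_Delta q i)"

definition mutual_dist :: "(nat \<Rightarrow> real^2) \<Rightarrow> nat \<Rightarrow> nat \<Rightarrow> real" where
  "mutual_dist q i j = dist (q i) (q j)"

definition central_config4 :: "(nat \<Rightarrow> real) \<Rightarrow> (nat \<Rightarrow> real^2) \<Rightarrow> bool" where
  "central_config4 m q \<longleftrightarrow>
     (\<forall>i\<in>{1..4}. \<forall>j\<in>{1..4}. i \<noteq> j \<longrightarrow> q i \<noteq> q j) \<and>
     (\<Sum>i\<in>{1..4}. m i *\<^sub>R q i) = 0 \<and>
     (\<exists>lam::real. \<forall>i\<in>{1..4}.
        (\<Sum>j\<in>{1..4} - {i}. (m j / (dist (q i) (q j)) ^ 3) *\<^sub>R (q j - q i)) = lam *\<^sub>R q i)"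

definition convex_quad_cyclic :: "(nat \<Rightarrow> real^2) \<Rightarrow> bool" where
  "convex_quad_cyclic q \<longleftrightarrow>
     (det3 (q 1) (q 2) (q 3) > 0 \<and> det3 (q 2) (q 3) (q 4) > 0 \<and>
      det3 (q 3) (q 4) (q 1) > 0 \<and> det3 (q 4) (q 1) (q 2) > 0) \<or>
     (det3 (q 1) (q 2) (q 3) < 0 \<and> det3 (q 2) (q 3) (q 4) < 0 \<and>
      det3 (q 3) (q 4) (q 1) < 0 \<and> det3 (q 4) (q 1) (q 2) < 0)"

end

theory Submission
  imports Defs
begin

lemma ker:
  fixes ba bb bc x0 y0 xa ya xb yb xc yc :: real
  assumes "ba*(xa-x0)+bb*(xb-x0)+bc*(xc-x0)=0" "ba*(ya-y0)+bb*(yb-y0)+bc*(yc-y0)=0"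
  shows "ba * ((xc-x0)*(ya-y0)-(yc-y0)*(xa-x0)) = bb * ((xb-x0)*(yc-y0)-(yb-y0)*(xc-x0))"
    "ba * ((xa-x0)*(yb-y0)-(ya-y0)*(xb-x0)) = bc * ((xb-x0)*(yc-y0)-(yb-y0)*(xc-x0))"
    "bb * ((xa-x0)*(yb-y0)-(ya-y0)*(xb-x0)) = bc * ((xc-x0)*(ya-y0)-(yc-y0)*(xa-x0))"
  using assms by algebra+

lemma geo:
  fixes x1 y1 x2 y2 x3 y3 x4 y4 :: real
  assumes "(x3-x1)^2+(y3-y1)^2 = (x4-x1)^2+(y4-y1)^2"
    "(x3-x2)^2+(y3-y2)^2 = (x4-x2)^2+(y4-y2)^2"
    "x3 \<noteq> x4 \<or> y3 \<noteq> y4"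
  shows "((x2-x1)*(y3-y1)-(y2-y1)*(x3-x1)) + ((x2-x1)*(y4-y1)-(y2-y1)*(x4-x1)) = 0"
proof -
  define c where "c = ((x2-x1)*(y3-y1)-(y2-y1)*(x3-x1)) + ((x2-x1)*(y4-y1)-(y2-y1)*(x4-x1))"
  have "c * (x3-x4) = 0" using assms(1,2) unfolding c_def by algebra
  moreover have "c * (y3-y4) = 0" using assms(1,2) unfolding c_def by algebra
  ultimately show ?thesis using assms(3) unfolding c_def by auto
qed

lemma cube_inj: "(a::real) > 0 \<Longrightarrow> b > 0 \<Longrightarrow> 1/a^3 = 1/b^3 \<Longrightarrow> a = b"
  by (metis divide_cancel_left power_eq_imp_eq_base less_imp_le zero_less_numeral zero_neq_one)

lemma core:
  fixes x1 y1 x2 y2 x3 y3 x4 y4 d12 d13 d14 d23 d24 lam \<alpha> \<beta> :: real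
  assumes a: "\<alpha> > 0" and b: "\<beta> > 0"
    and dpos: "d12 > 0" "d13 > 0" "d14 > 0" "d23 > 0" "d24 > 0"
    and r1x: "\<beta>/d12^3*(x2-x1) + \<alpha>/d13^3*(x3-x1) + \<alpha>/d14^3*(x4-x1) = lam*x1"
    and r1y: "\<beta>/d12^3*(y2-y1) + \<alpha>/d13^3*(y3-y1) + \<alpha>/d14^3*(y4-y1) = lam*y1"
    and r2x: "\<beta>/d12^3*(x1-x2) + \<alpha>/d23^3*(x3-x2) + \<alpha>/d24^3*(x4-x2) = lam*x2"
    and r2y: "\<beta>/d12^3*(y1-y2) + \<alpha>/d23^3*(y3-y2) + \<alpha>/d24^3*(y4-y2) = lam*y2"
    and cmx: "\<beta>*x1 + \<beta>*x2 + \<alpha>*x3 + \<alpha>*x4 = 0"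
    and cmy: "\<beta>*y1 + \<beta>*y2 + \<alpha>*y3 + \<alpha>*y4 = 0"
    and dd: "d13^2 = (x1-x3)^2+(y1-y3)^2" "d14^2 = (x1-x4)^2+(y1-y4)^2"
            "d23^2 = (x2-x3)^2+(y2-y3)^2" "d24^2 = (x2-x4)^2+(y2-y4)^2"
    and eq: "d23 = d14"
    and cv: "let D = (\<lambda>xa ya xb yb xc yc. (xb-xa)*(yc-ya) - (yb-ya)*(xc-xa)) in
        (D x1 y1 x2 y2 x3 y3 > 0 \<and> D x2 y2 x3 y3 x4 y4 > 0 \<and> D x3 y3 x4 y4 x1 y1 > 0 \<and> D x4 y4 x1 y1 x2 y2 > 0) \<or>
        (D x1 y1 x2 y2 x3 y3 < 0 \<and> D x2 y2 x3 y3 x4 y4 < 0 \<and> D x3 y3 x4 y4 x1 y1 < 0 \<and> D x4 y4 x1 y1 x2 y2 < 0)"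
    and dst: "x3 \<noteq> x4 \<or> y3 \<noteq> y4"
  shows "(x2-x1)*(y4-y1)-(y2-y1)*(x4-x1) = (x2-x1)*(y3-y1)-(y2-y1)*(x3-x1)"
proof -
  define S where "S = 2*\<beta> + 2*\<alpha>"
  have Sp: "S > 0" using a b unfolding S_def by simp
  define t12 where "t12 = 1/d12^3"
  define t13 where "t13 = 1/d13^3"
  define t14 where "t14 = 1/d14^3"
  define t23 where "t23 = 1/d23^3"
  define t24 where "t24 = 1/d24^3"
  have t2314: "t23 = t14" unfolding t23_def t14_def eq ..
  define w1 where "w1 = (x3-x2)*(y4-y2)-(y3-y2)*(x4-x2)"
  define w2 where "w2 = -((x3-x1)*(y4-y1)-(y3-y1)*(x4-x1))"
  define w3 where "w3 = (x2-x1)*(y4-y1)-(y2-y1)*(x4-x1)"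
  define w4 where "w4 = -((x2-x1)*(y3-y1)-(y2-y1)*(x3-x1))"
  have sw: "w1 + w2 + w3 + w4 = 0" unfolding w1_def w2_def w3_def w4_def by algebra
  have sgn: "(w1 > 0 \<and> w2 < 0 \<and> w3 > 0 \<and> w4 < 0) \<or> (w1 < 0 \<and> w2 > 0 \<and> w3 < 0 \<and> w4 > 0)"
  proof -
    have e1: "w1 = (x3-x2)*(y4-y2)-(y3-y2)*(x4-x2)" by (simp add: w1_def)
    have e2: "w2 = -((x4-x3)*(y1-y3)-(y4-y3)*(x1-x3))" unfolding w2_def by algebra
    have e3: "w3 = (x1-x4)*(y2-y4)-(y1-y4)*(x2-x4)" unfolding w3_def by algebra
    have e4: "w4 = -((x2-x1)*(y3-y1)-(y2-y1)*(x3-x1))" by (simp add: w4_def)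
    show ?thesis using cv unfolding Let_def e1 e2 e3 e4 by linarith
  qed
  have r1x': "(\<beta>*(S*t12+lam))*(x2-x1) + (\<alpha>*(S*t13+lam))*(x3-x1) + (\<alpha>*(S*t14+lam))*(x4-x1) = 0"
  proof -
    have "\<beta>*t12*(x2-x1) + \<alpha>*t13*(x3-x1) + \<alpha>*t14*(x4-x1) = lam*x1"
      using r1x unfolding t12_def t13_def t14_def by simp
    then show ?thesis using cmx unfolding S_def by algebra
  qed
  have r1y': "(\<beta>*(S*t12+lam))*(y2-y1) + (\<alpha>*(S*t13+lam))*(y3-y1) + (\<alpha>*(S*t14+lam))*(y4-y1) = 0"
  proof -
    have "\<beta>*t12*(y2-y1) + \<alpha>*t13*(y3-y1) + \<alpha>*t14*(y4-y1) = lam*y1"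
      using r1y unfolding t12_def t13_def t14_def by simp
    then show ?thesis using cmy unfolding S_def by algebra
  qed
  have r2x': "(\<beta>*(S*t12+lam))*(x1-x2) + (\<alpha>*(S*t23+lam))*(x3-x2) + (\<alpha>*(S*t24+lam))*(x4-x2) = 0"
  proof -
    have "\<beta>*t12*(x1-x2) + \<alpha>*t23*(x3-x2) + \<alpha>*t24*(x4-x2) = lam*x2"
      using r2x unfolding t12_def t23_def t24_def by simp
    then show ?thesis using cmx unfolding S_def by algebra
  qed
  have r2y': "(\<beta>*(S*t12+lam))*(y1-y2) + (\<alpha>*(S*t23+lam))*(y3-y2) + (\<alpha>*(S*t24+lam))*(y4-y2) = 0"
  proof -
    have "\<beta>*t12*(y1-y2) + \<alpha>*t23*(y3-y2) + \<alpha>*t24*(y4-y2) = lam*y2"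
      using r2y unfolding t12_def t23_def t24_def by simp
    then show ?thesis using cmy unfolding S_def by algebra
  qed
  define K where "K = S*t14+lam"
  define k12 where "k12 = S*t12+lam"
  define k13 where "k13 = S*t13+lam"
  define k24 where "k24 = S*t24+lam"
  note k1 = ker[OF r1x' r1y']
  note k2 = ker[OF r2x' r2y']
  have R1a: "\<beta>*k12*w4 = \<alpha>*K*w2" using k1(2) unfolding k12_def K_def w2_def w4_def by algebra
  have R1b: "\<alpha>*k13*w4 = \<alpha>*K*w3" using k1(3) unfolding k13_def K_def w3_def w4_def by algebra
  have R2a: "\<beta>*k12*w3 = \<alpha>*K*w1" using k2(1) t2314 unfolding k12_def K_def w1_def w3_def by algebra
  have R2b: "\<alpha>*K*w4 = \<alpha>*k24*w3" using k2(3) t2314 unfolding k24_def K_def w3_def w4_def by algebra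
  have w34: "w3 \<noteq> 0" "w4 \<noteq> 0" "w2 + w4 \<noteq> 0" using sgn by auto
  show ?thesis
  proof (cases "K = 0")
    case False
    have "\<alpha>*K*(w1*w4) = \<alpha>*K*(w2*w3)"
    proof -
      have "\<alpha>*K*(w1*w4) = (\<beta>*k12*w3)*w4" using R2a by simp
      also have "\<dots> = (\<beta>*k12*w4)*w3" by simp
      also have "\<dots> = \<alpha>*K*(w2*w3)" using R1a by simp
      finally show ?thesis .
    qed
    then have p: "w1*w4 = w2*w3" using False a by simp
    have "(w2+w4)*(w3+w4) = 0" using p sw by algebra
    then have "w3 + w4 = 0" using w34 by simp
    then show ?thesis unfolding w3_def w4_def by simp
  next
    case True
    have "k13 = 0" using R1b True a w34 by simp
    have "k24 = 0" using R2b True a w34 by simp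
    have "t13 = t14" using \<open>k13 = 0\<close> True Sp unfolding k13_def K_def
      by (metis add_right_cancel mult_cancel_left less_irrefl)
    then have "d13 = d14" using cube_inj dpos unfolding t13_def t14_def by blast
    have "t23 = t24" using \<open>k24 = 0\<close> True Sp t2314 unfolding k24_def K_def
      by (metis add_right_cancel mult_cancel_left less_irrefl)
    then have "d23 = d24" using cube_inj dpos unfolding t23_def t24_def by blast
    have g1: "(x3-x1)^2+(y3-y1)^2 = (x4-x1)^2+(y4-y1)^2"
      using dd \<open>d13 = d14\<close> by (simp add: power2_commute)
    have g2: "(x3-x2)^2+(y3-y2)^2 = (x4-x2)^2+(y4-y2)^2"
      using dd \<open>d23 = d24\<close> by (simp add: power2_commute)
    have "w3 = w4" using geo[OF g1 g2 dst] unfolding w3_def w4_def by linarith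
    then show ?thesis using sgn by auto
  qed
qed

lemma dist2: "(dist (a::real^2) b)^2 = (a$1-b$1)^2 + (a$2-b$2)^2"
  by (simp add: dist_vec_def L2_set_def sum_2 dist_real_def)

theorem lemma4p2:
  fixes \<alpha> \<beta> :: real and m :: "nat \<Rightarrow> real" and q :: "nat \<Rightarrow> real^2"
  assumes "\<beta> > \<alpha>" and "\<alpha> > 0"
    and "m 1 = \<beta>" and "m 2 = \<beta>" and "m 3 = \<alpha>" and "m 4 = \<alpha>"
    and "central_config4 m q"
    and "convex_quad_cyclic q"
    and "mutual_dist q 2 3 = mutual_dist q 1 4"
  shows "Delta q 4 = - Delta q 3"
proof -
  have U: "{1..4::nat} = {1,2,3,4}" by auto
  have D1: "{1..4::nat} - {1} = {2,3,4}" by auto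
  have D2: "{1..4::nat} - {2} = {1,3,4}" by auto
  obtain lam where L: "\<forall>i\<in>{1..4::nat}.
        (\<Sum>j\<in>{1..4} - {i}. (m j / (dist (q i) (q j)) ^ 3) *\<^sub>R (q j - q i)) = lam *\<^sub>R q i"
    using assms(7) unfolding central_config4_def by blast
  have cm: "(\<Sum>i\<in>{1..4}. m i *\<^sub>R q i) = 0"
    using assms(7) unfolding central_config4_def by blast
  have dist: "\<forall>i\<in>{1..4::nat}. \<forall>j\<in>{1..4}. i \<noteq> j \<longrightarrow> q i \<noteq> q j"
    using assms(7) unfolding central_config4_def by blast
  have ne: "q 1 \<noteq> q 2" "q 1 \<noteq> q 3" "q 1 \<noteq> q 4" "q 2 \<noteq> q 3" "q 2 \<noteq> q 4" "q 3 \<noteq> q 4"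
    using dist by (auto simp: U)
  have e1: "(m 2 / (dist (q 1) (q 2)) ^ 3) *\<^sub>R (q 2 - q 1) + (m 3 / (dist (q 1) (q 3)) ^ 3) *\<^sub>R (q 3 - q 1) + (m 4 / (dist (q 1) (q 4)) ^ 3) *\<^sub>R (q 4 - q 1) = lam *\<^sub>R q 1"
    using L[rule_format, of 1, unfolded D1] by (simp add: add.assoc)
  have e2: "(m 1 / (dist (q 2) (q 1)) ^ 3) *\<^sub>R (q 1 - q 2) + (m 3 / (dist (q 2) (q 3)) ^ 3) *\<^sub>R (q 3 - q 2) + (m 4 / (dist (q 2) (q 4)) ^ 3) *\<^sub>R (q 4 - q 2) = lam *\<^sub>R q 2"
    using L[rule_format, of 2, unfolded D2] by (simp add: add.assoc)
  have cm': "m 1 *\<^sub>R q 1 + m 2 *\<^sub>R q 2 + m 3 *\<^sub>R q 3 + m 4 *\<^sub>R q 4 = 0"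
    using cm[unfolded U] by (simp add: add.assoc)
  have r1x: "\<beta>/(dist (q 1) (q 2))^3*(q 2$1-q 1$1) + \<alpha>/(dist (q 1) (q 3))^3*(q 3$1-q 1$1) + \<alpha>/(dist (q 1) (q 4))^3*(q 4$1-q 1$1) = lam*q 1$1"
    using arg_cong[OF e1, of "\<lambda>v. v $ 1"] assms(3-6) by simp
  have r1y: "\<beta>/(dist (q 1) (q 2))^3*(q 2$2-q 1$2) + \<alpha>/(dist (q 1) (q 3))^3*(q 3$2-q 1$2) + \<alpha>/(dist (q 1) (q 4))^3*(q 4$2-q 1$2) = lam*q 1$2"
    using arg_cong[OF e1, of "\<lambda>v. v $ 2"] assms(3-6) by simp
  have r2x: "\<beta>/(dist (q 1) (q 2))^3*(q 1$1-q 2$1) + \<alpha>/(dist (q 2) (q 3))^3*(q 3$1-q 2$1) + \<alpha>/(dist (q 2) (q 4))^3*(q 4$1-q 2$1) = lam*q 2$1"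
    using arg_cong[OF e2, of "\<lambda>v. v $ 1"] assms(3-6) by (simp add: dist_commute)
  have r2y: "\<beta>/(dist (q 1) (q 2))^3*(q 1$2-q 2$2) + \<alpha>/(dist (q 2) (q 3))^3*(q 3$2-q 2$2) + \<alpha>/(dist (q 2) (q 4))^3*(q 4$2-q 2$2) = lam*q 2$2"
    using arg_cong[OF e2, of "\<lambda>v. v $ 2"] assms(3-6) by (simp add: dist_commute)
  have cmx: "\<beta>*q 1$1 + \<beta>*q 2$1 + \<alpha>*q 3$1 + \<alpha>*q 4$1 = 0"
    using arg_cong[OF cm', of "\<lambda>v. v $ 1"] assms(3-6) by simp
  have cmy: "\<beta>*q 1$2 + \<beta>*q 2$2 + \<alpha>*q 3$2 + \<alpha>*q 4$2 = 0"
    using arg_cong[OF cm', of "\<lambda>v. v $ 2"] assms(3-6) by simp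
  have dst: "q 3$1 \<noteq> q 4$1 \<or> q 3$2 \<noteq> q 4$2"
    using ne(6) by (auto simp: vec_eq_iff forall_2)
  have eq: "dist (q 2) (q 3) = dist (q 1) (q 4)" using assms(9) unfolding mutual_dist_def .
  have cv: "let D = (\<lambda>xa ya xb yb xc yc. (xb-xa)*(yc-ya) - (yb-ya)*(xc-xa)) in
        (D (q 1$1) (q 1$2) (q 2$1) (q 2$2) (q 3$1) (q 3$2) > 0 \<and> D (q 2$1) (q 2$2) (q 3$1) (q 3$2) (q 4$1) (q 4$2) > 0 \<and> D (q 3$1) (q 3$2) (q 4$1) (q 4$2) (q 1$1) (q 1$2) > 0 \<and> D (q 4$1) (q 4$2) (q 1$1) (q 1$2) (q 2$1) (q 2$2) > 0) \<or>
        (D (q 1$1) (q 1$2) (q 2$1) (q 2$2) (q 3$1) (q 3$2) < 0 \<and> D (q 2$1) (q 2$2) (q 3$1) (q 3$2) (q 4$1) (q 4$2) < 0 \<and> D (q 3$1) (q 3$2) (q 4$1) (q 4$2) (q 1$1) (q 1$2) < 0 \<and> D (q 4$1) (q 4$2) (q 1$1) (q 1$2) (q 2$1) (q 2$2) < 0)"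
    using assms(8) unfolding convex_quad_cyclic_def det3_def Let_def .
  have c: "(q 2$1-q 1$1)*(q 4$2-q 1$2)-(q 2$2-q 1$2)*(q 4$1-q 1$1) = (q 2$1-q 1$1)*(q 3$2-q 1$2)-(q 2$2-q 1$2)*(q 3$1-q 1$1)"
    apply (rule core[OF assms(2) _ _ _ _ _ _ r1x r1y r2x r2y cmx cmy _ _ _ _ eq cv dst])
    using assms(1,2) ne by (simp_all add: dist2 dist_commute)
  then show ?thesis
    unfolding Delta_def abs_Delta_def tri_area_def det3_def by simp
qed

end
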